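(* Let $(m_n)$ be a sequence of positive integers and $V_n\subseteq GF(2)^{m_n}$ linear subspaces. If $|\mathcal{A}_1(V_n)|\to\infty$ as $n\to\infty$, then the sequence $(V_n)$ has a uniform weight spectrum.
   Context: The weight ${\rm wt}(x)$ of $x\in GF(2)^m$ is the number of nonzero coordinates; for $W\subseteq GF(2)^m$, $\mathcal{A}_i(W)=\{x\in W:{\rm wt}(x)=i\}$. For a linear subspace $V\subseteq GF(2)^m$ let $\alpha(V)=\max_{i,\,x}\frac{|\mathcal{A}_i(V+x)|}{|V|}$, the maximum over all $i$ and all $x\in GF(2)^m$. A sequence of subspaces $V_n\subseteq GF(2)^{m_n}$ has a uniform weight spectrum if $\alpha(V_n)\to0$ as $n\to\infty$. *)

theory Defs
  imports Complex_Main "HOL-Library.Z2"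
begin

text \<open>GF(2)^m is modelled as the functions nat => bit (bit = the field GF(2) from HOL-Library.Z2)
  that vanish outside the coordinates 0..m-1.\<close>

definition gf2_space :: "nat \<Rightarrow> (nat \<Rightarrow> bit) set" where
  "gf2_space m = {x. \<forall>i\<ge>m. x i = 0}"

definition vadd :: "(nat \<Rightarrow> bit) \<Rightarrow> (nat \<Rightarrow> bit) \<Rightarrow> (nat \<Rightarrow> bit)" where
  "vadd x y = (\<lambda>i. x i + y i)"

definition vscale :: "bit \<Rightarrow> (nat \<Rightarrow> bit) \<Rightarrow> (nat \<Rightarrow> bit)" where
  "vscale c x = (\<lambda>i. c * x i)"

definition is_subspace :: "nat \<Rightarrow> (nat \<Rightarrow> bit) set \<Rightarrow> bool" where
  "is_subspace m V \<longleftrightarrow> V \<subseteq> gf2_space m \<and> (\<lambda>_. 0) \<in> V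
     \<and> (\<forall>x\<in>V. \<forall>y\<in>V. vadd x y \<in> V) \<and> (\<forall>c. \<forall>x\<in>V. vscale c x \<in> V)"

definition wt :: "(nat \<Rightarrow> bit) \<Rightarrow> nat" where
  "wt x = card {i. x i \<noteq> 0}"

definition weight_class :: "nat \<Rightarrow> (nat \<Rightarrow> bit) set \<Rightarrow> (nat \<Rightarrow> bit) set" where
  "weight_class i W = {x\<in>W. wt x = i}"

definition coset :: "(nat \<Rightarrow> bit) set \<Rightarrow> (nat \<Rightarrow> bit) \<Rightarrow> (nat \<Rightarrow> bit) set" where
  "coset V x = (\<lambda>v. vadd v x) ` V"

text \<open>alpha(V) = max over all i and all x in GF(2)^m of |A_i(V+x)| / |V|.\<close>
definition alpha :: "nat \<Rightarrow> (nat \<Rightarrow> bit) set \<Rightarrow> real" where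
  "alpha m V = Sup {real (card (weight_class i (coset V x))) / real (card V) | i x. x \<in> gf2_space m}"

end

theory Submission imports Defs begin

declare add_bit_eq_xor[simp del] mult_bit_eq_and[simp del]

lemma bit_add_self [simp]: "(a::bit) + a = 0" by (cases a) simp_all
lemma bit_add1_ne0: "(a::bit) + 1 \<noteq> 0 \<longleftrightarrow> a = 0" by (cases a) simp_all

definition ind :: "nat set \<Rightarrow> nat \<Rightarrow> bit" where
  "ind T = (\<lambda>i. if i \<in> T then 1 else 0)"

lemma gf2_sub: "f \<in> gf2_space m \<Longrightarrow> {i. f i \<noteq> 0} \<subseteq> {..<m}"
proof
  fix i assume f: "f \<in> gf2_space m" and i: "i \<in> {i. f i \<noteq> 0}"
  have h: "\<forall>i\<ge>m. f i = 0" using f unfolding gf2_space_def by blast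
  show "i \<in> {..<m}" using h i by (metis leI lessThan_iff mem_Collect_eq)
qed

lemma ind_supp: "f = ind {i. f i \<noteq> 0}"
proof
  fix i show "f i = ind {i. f i \<noteq> 0} i" unfolding ind_def by (cases "f i") simp_all
qed

lemma finite_gf2: "finite (gf2_space m)"
proof -
  have "gf2_space m \<subseteq> ind ` Pow {..<m}"
  proof
    fix f assume f: "f \<in> gf2_space m"
    then have "{i. f i \<noteq> 0} \<in> Pow {..<m}" using gf2_sub by blast
    then show "f \<in> ind ` Pow {..<m}" using ind_supp[of f] by blast
  qed
  then show ?thesis using finite_subset by blast
qed

lemma wt1_iff: "wt x = 1 \<longleftrightarrow> (\<exists>j. x = ind {j})"
proof
  assume "wt x = 1"
  then have "card {i. x i \<noteq> 0} = Suc 0" unfolding wt_def by (simp only: One_nat_def)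
  from card_1_singleton_iff[THEN iffD1, OF this] obtain j where j: "{i. x i \<noteq> 0} = {j}" by blast
  have "x = ind {j}"
  proof
    fix i
    have e: "x i \<noteq> 0 \<longleftrightarrow> i = j" using j by blast
    show "x i = ind {j} i"
    proof (cases "i = j")
      case True
      then have "x i \<noteq> 0" using e by blast
      then have "x i = 1" by (cases "x i") blast+
      then show ?thesis using True unfolding ind_def by simp
    next
      case False
      then have "x i = 0" using e by blast
      then show ?thesis using False unfolding ind_def by simp
    qed
  qed
  then show "\<exists>j. x = ind {j}" ..
next
  assume "\<exists>j. x = ind {j}"
  then obtain j where "x = ind {j}" by blast
  then have "{i. x i \<noteq> 0} = {j}" unfolding ind_def by auto
  then show "wt x = 1" unfolding wt_def by simp
qed

lemma card_wc1: "card (weight_class 1 V) = card {j. ind {j} \<in> V}"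
proof -
  have "weight_class 1 V = (\<lambda>j. ind {j}) ` {j. ind {j} \<in> V}"
    unfolding weight_class_def using wt1_iff by auto
  moreover have "inj (\<lambda>j. ind {j})"
  proof
    fix a b assume "ind {a} = ind {b}"
    then have "ind {a} a = ind {b} a" by simp
    then show "a = b" unfolding ind_def by (auto split: if_splits)
  qed
  ultimately show ?thesis by (simp add: card_image inj_on_subset)
qed

lemma ind_in_V:
  assumes sub: "is_subspace m V" and "finite T" and "\<forall>t\<in>T. ind {t} \<in> V"
  shows "ind T \<in> V"
  using assms(2,3)
proof (induction T rule: finite_induct)
  case empty
  then show ?case using sub unfolding is_subspace_def ind_def by simp
next
  case (insert t T)
  have "ind (insert t T) = vadd (ind T) (ind {t})"
    using insert(2) unfolding ind_def vadd_def by auto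
  then show ?case using insert sub unfolding is_subspace_def by auto
qed

lemma card_filter_sum: "finite C \<Longrightarrow> card {c\<in>C. Q c} = (\<Sum>c\<in>C. if Q c then 1 else 0)"
  by (simp add: sum.If_cases Int_def)

lemma key:
  assumes sub: "is_subspace m V" and x: "x \<in> gf2_space m"
    and S: "S \<subseteq> {j. ind {j} \<in> V}" "finite S"
  shows "card (weight_class i (coset V x)) * 2 ^ card S \<le> card V * (card S choose (card S div 2))"
proof -
  define C where "C = coset V x"
  define fl where "fl T c = vadd c (ind T)" for T c
  define P where "P T c \<longleftrightarrow> wt (fl T c) = i" for T c
  have Vg: "V \<subseteq> gf2_space m" using sub unfolding is_subspace_def by auto
  have finV: "finite V" using finite_subset[OF Vg finite_gf2] .
  have injx: "inj_on (\<lambda>v. vadd v x) V"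
  proof
    fix v w assume "vadd v x = vadd w x"
    then have "v i + x i = w i + x i" for i unfolding vadd_def by metis
    then have "v i = w i" for i by (metis add_right_cancel)
    then show "v = w" by (rule ext)
  qed
  have finC: "finite C" unfolding C_def coset_def using finV by simp
  have cardC: "card C = card V" unfolding C_def coset_def using card_image[OF injx] .
  have Cg: "C \<subseteq> gf2_space m" using Vg x unfolding C_def coset_def gf2_space_def vadd_def by auto
  have flC: "fl T c \<in> C" if TS: "T \<subseteq> S" and cC: "c \<in> C" for T c
  proof -
    obtain v where v: "v \<in> V" "c = vadd v x" using cC unfolding C_def coset_def by auto
    have "ind T \<in> V" using ind_in_V[OF sub finite_subset[OF TS S(2)]] TS S(1) by auto
    then have "vadd v (ind T) \<in> V" using v(1) sub unfolding is_subspace_def by auto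
    moreover have "fl T c = vadd (vadd v (ind T)) x" unfolding fl_def v(2) vadd_def by (simp add: ac_simps)
    ultimately show ?thesis unfolding C_def coset_def by auto
  qed
  have flfl: "fl T (fl T c) = c" for T c
    unfolding fl_def vadd_def by (simp add: add.assoc)
  have inj_fl: "inj_on (fl T) A" for T A
    by (metis flfl inj_on_inverseI)
  have eq1: "card {c\<in>C. P T c} = card (weight_class i C)" if "T \<in> Pow S" for T
  proof -
    have "fl T ` {c\<in>C. P T c} = weight_class i C"
    proof
      show "fl T ` {c\<in>C. P T c} \<subseteq> weight_class i C"
        using flC that unfolding weight_class_def P_def by auto
      show "weight_class i C \<subseteq> fl T ` {c\<in>C. P T c}"
      proof
        fix d assume d: "d \<in> weight_class i C"
        have "fl T d \<in> {c\<in>C. P T c}" using d flC that flfl unfolding weight_class_def P_def by auto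
        then show "d \<in> fl T ` {c\<in>C. P T c}" using flfl[of T d] by (metis image_eqI)
      qed
    qed
    then show ?thesis using card_image[OF inj_fl] by metis
  qed
  have le2: "card {T\<in>Pow S. P T c} \<le> card S choose (card S div 2)" if c: "c \<in> C" for c
  proof -
    define N where "N = {l. c l \<noteq> 0}"
    have "N \<subseteq> {..<m}" unfolding N_def using gf2_sub c Cg by blast
    then have finN: "finite N" using finite_subset by blast
    define A where "A = N \<inter> S"
    define g where "g T = (A - T) \<union> (T - A)" for T
    define w0 where "w0 = card (N - S)"
    have supp: "{l. fl T c l \<noteq> 0} = (N - S) \<union> g T" if "T \<subseteq> S" for T
      using that unfolding N_def g_def A_def fl_def vadd_def ind_def by (auto simp: bit_add1_ne0)
    have wtT: "wt (fl T c) = w0 + card (g T)" if "T \<subseteq> S" for T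
    proof -
      have "g T \<subseteq> S" using that unfolding g_def A_def by auto
      moreover have "finite (g T)" using finite_subset[OF _ S(2)] calculation by auto
      ultimately show ?thesis unfolding wt_def supp[OF that] w0_def
        by (subst card_Un_disjoint) (use finN in auto)
    qed
    have ggT: "g (g T) = T" for T unfolding g_def by auto
    have injg: "inj_on g X" for X by (metis ggT inj_on_inverseI)
    have "g ` {T\<in>Pow S. P T c} \<subseteq> {U. U \<subseteq> S \<and> card U = i - w0}"
      using wtT unfolding P_def g_def A_def by auto
    then have "card (g ` {T\<in>Pow S. P T c}) \<le> card {U. U \<subseteq> S \<and> card U = i - w0}"
      by (rule card_mono[rotated]) (use S(2) in simp)
    also have "\<dots> = card S choose (i - w0)" using n_subsets[OF S(2)] .
    also have "\<dots> \<le> card S choose (card S div 2)" by (rule binomial_maximum)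
    finally show ?thesis using card_image[OF injg] by metis
  qed
  have "card (weight_class i C) * 2 ^ card S = (\<Sum>T\<in>Pow S. card {c\<in>C. P T c})"
    using eq1 card_Pow[OF S(2)] by simp
  also have "\<dots> = (\<Sum>T\<in>Pow S. \<Sum>c\<in>C. if P T c then 1 else 0)"
    using card_filter_sum[OF finC] by simp
  also have "\<dots> = (\<Sum>c\<in>C. \<Sum>T\<in>Pow S. if P T c then 1 else 0)"
    by (rule sum.swap)
  also have "\<dots> = (\<Sum>c\<in>C. card {T\<in>Pow S. P T c})"
    using card_filter_sum[of "Pow S"] S(2) by simp
  also have "\<dots> \<le> (\<Sum>c\<in>C. card S choose (card S div 2))"
    by (rule sum_mono) (rule le2)
  also have "\<dots> = card V * (card S choose (card S div 2))" using cardC by simp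
  finally show ?thesis unfolding C_def .
qed

lemma ratio: fixes A V C p :: real shows "0<V \<Longrightarrow> 0<p \<Longrightarrow> A*p \<le> V*C \<Longrightarrow> A/V \<le> C/p"
  by (simp add: divide_le_eq le_divide_eq mult.commute)
lemma alg: "Suc j * X = 2*Suc j*Y \<Longrightarrow> Suc j * Y' = (2*j+1)*Z \<Longrightarrow> Y = Y' \<Longrightarrow> Suc j * X = 2*(2*j+1)*(Z::nat)"
proof -
  assume a: "Suc j * X = 2*Suc j*Y" and b: "Suc j * Y' = (2*j+1)*Z" and c: "Y = Y'"
  have "Suc j * X = 2 * (Suc j * Y)" using a by simp
  then show ?thesis using b c by simp
qed
lemma cb_rec: "Suc j * ((2 * Suc j) choose Suc j) = 2 * (2*j+1) * ((2*j) choose j)"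
proof (rule alg)
  have e: "Suc (2*j+1) = 2 * Suc j" by simp
  show "Suc j * ((2 * Suc j) choose Suc j) = 2 * Suc j * ((2*j+1) choose j)"
    using Suc_times_binomial[of j "2*j+1"] unfolding e .
  have e2: "Suc (2*j) = 2*j+1" by simp
  show "Suc j * ((2*j+1) choose Suc j) = (2*j+1) * ((2*j) choose j)"
    using Suc_times_binomial[of j "2*j"] unfolding e2 .
  have e3: "2*j+1-j = Suc j" by simp
  show "(2*j+1) choose j = (2*j+1) choose Suc j"
    using binomial_symmetric[of j "2*j+1"] unfolding e3 by simp
qed

definition acb :: "nat \<Rightarrow> real" where "acb j = real ((2*j) choose j) / 4^j"

lemma gen: fixes p t C :: real shows "p > 0 \<Longrightarrow> t \<ge> 0 \<Longrightarrow> (2*(2*t+1)*C/(t+1)) / (4*p) = C/p*(2*t+1)/(2*t+2)"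
proof -
  assume p: "p > 0" and t: "t \<ge> 0"
  have a: "t + 1 \<noteq> 0" "p \<noteq> 0" using p t by auto
  have b: "2*t+2 = 2*(t+1)" by simp
  have L: "(2*(2*t+1)*C/(t+1)) / (4*p) = (2*(2*t+1)*C) / ((t+1)*(4*p))" by (simp add: divide_divide_eq_left)
  have R: "C/p*(2*t+1)/(2*(t+1)) = (C*(2*t+1)) / (p*(2*(t+1)))" by simp
  have nz: "(t+1)*(4*p) \<noteq> 0" "p*(2*(t+1)) \<noteq> 0" using a by auto
  show ?thesis unfolding b L R by (subst frac_eq_eq[OF nz]) (simp add: algebra_simps)
qed

lemma acb_Suc_gen: assumes "real ((2 * Suc j) choose Suc j) = 2*(2*real j+1)*real ((2*j) choose j)/(real j+1)"
  shows "acb (Suc j) = acb j * (2*real j+1) / (2*real j+2)"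
proof -
  have "acb (Suc j) = (2*(2*real j+1)*real ((2*j) choose j)/(real j+1)) / (4*4^j)"
    unfolding acb_def assms by simp
  also have "\<dots> = real ((2*j) choose j)/4^j*(2*real j+1)/(2*real j+2)" by (rule gen) simp_all
  finally show ?thesis unfolding acb_def by simp
qed

lemma cb_aux: "Suc j * (X::nat) = 2*(2*j+1)*Z \<Longrightarrow> real X = 2*(2*real j+1)*real Z/(real j+1)"
proof -
  assume h: "Suc j * X = 2*(2*j+1)*Z"
  have "real (Suc j * X) = real (2*(2*j+1)*Z)" using h by (rule arg_cong)
  then have e: "(real j + 1) * real X = 2*(2*real j+1)*real Z" by (simp add: algebra_simps)
  have p: "real j + 1 > 0" by simp
  show ?thesis using e p by (simp add: eq_divide_eq algebra_simps)
qed

lemma aux2: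
  fixes a t :: real
  assumes h: "a^2*(2*t+1) \<le> 1" and t: "t \<ge> 0"
  shows "(a*(2*t+1)/(2*t+2))^2*(2*t+3) \<le> 1"
proof -
  have p: "(2*t+2)^2 > 0" using t by simp
  have e: "(a*(2*t+1)/(2*t+2))^2*(2*t+3) = (a^2*(2*t+1)) * ((2*t+1)*(2*t+3)) / (2*t+2)^2"
    by (simp add: power_divide power_mult_distrib power2_eq_square)
  have q: "(a^2*(2*t+1)) * ((2*t+1)*(2*t+3)) \<le> 1 * ((2*t+1)*(2*t+3))"
    by (rule mult_right_mono[OF h]) (use t in simp)
  have q2: "(2*t+1)*(2*t+3) \<le> (2*t+2)^2" by (simp add: power2_eq_square algebra_simps)
  show ?thesis unfolding e using q q2 p by (simp add: divide_le_eq_1_pos)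
qed

lemma sm: fixes r :: real assumes "r > 0" "1 / r^2 < real j" shows "r^2 * (2*real j+1) > 1"
proof -
  have r2: "r^2 > 0" using assms by simp
  have "1 < real j * r^2" using assms r2 by (simp add: divide_less_eq)
  moreover have "real j * r^2 \<ge> 0" by simp
  moreover have "r^2 * (2*real j+1) = 2*(real j * r^2) + r^2" by (simp add: algebra_simps)
  ultimately show ?thesis using r2 by linarith
qed

lemma acb_sq_gen:
  assumes "\<And>j. acb (Suc j) = acb j * (2*real j+1) / (2*real j+2)"
  shows "(acb j)^2 * (2*real j+1) \<le> 1"
proof (induction j)
  case 0
  then show ?case unfolding acb_def by simp
next
  case (Suc j)
  have "(acb (Suc j))^2 * (2*real (Suc j)+1) = (acb j * (2*real j+1) / (2*real j+2))^2 * (2*real j+3)"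
    unfolding assms by simp
  also have "\<dots> \<le> 1" by (rule aux2[OF Suc]) simp
  finally show ?case .
qed

lemma acb_Suc: "acb (Suc j) = acb j * (2*real j+1) / (2*real j+2)"
  by (rule acb_Suc_gen[OF cb_aux[OF cb_rec]])

lemma acb_nonneg: "acb j \<ge> 0" unfolding acb_def by simp

lemma acb_sq: "(acb j)^2 * (2*real j+1) \<le> 1"
  by (rule acb_sq_gen[OF acb_Suc])

lemma acb_small: assumes "r > 0" shows "\<exists>j. acb j < r"
proof -
  obtain j :: nat where j: "1 / r^2 < j" using reals_Archimedean2 by blast
  have r2: "r^2 > 0" using assms by simp
  have s1: "(acb j)^2 * (2*real j+1) \<le> 1" by (rule acb_sq)
  have s2: "r^2 * (2*real j+1) > 1" by (rule sm[OF assms j])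
  have "(acb j)^2 < r^2"
  proof (rule ccontr)
    assume "\<not> (acb j)^2 < r^2"
    then have "r^2 \<le> (acb j)^2" by simp
    then have "r^2 * (2*real j+1) \<le> (acb j)^2 * (2*real j+1)" by (rule mult_right_mono) simp
    then show False using s1 s2 by linarith
  qed
  then have "acb j < r" by (rule power_less_imp_less_base) (use assms in simp)
  then show ?thesis ..
qed

lemma alpha_bound:
  assumes sub: "is_subspace m V" and b: "\<And>i x. x \<in> gf2_space m \<Longrightarrow> real (card (weight_class i (coset V x))) / real (card V) \<le> b"
  shows "0 \<le> alpha m V \<and> alpha m V \<le> b"
proof -
  define X where "X = {real (card (weight_class i (coset V x))) / real (card V) | i x. x \<in> gf2_space m}"
  have z: "(\<lambda>_. 0) \<in> gf2_space m" unfolding gf2_space_def by simp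
  have ne: "X \<noteq> {}" unfolding X_def using z by blast
  have ub: "\<forall>y\<in>X. y \<le> b" unfolding X_def using b by blast
  have bdd: "bdd_above X" using ub by (auto simp: bdd_above_def)
  obtain y where y: "y \<in> X" using ne by blast
  have "y \<ge> 0" using y unfolding X_def by auto
  then have "0 \<le> Sup X" using cSup_upper[OF y bdd] by linarith
  moreover have "Sup X \<le> b" using cSup_least[OF ne] ub by blast
  ultimately show ?thesis unfolding alpha_def X_def by simp
qed

theorem corollary2:
  fixes m :: "nat \<Rightarrow> nat" and V :: "nat \<Rightarrow> (nat \<Rightarrow> bit) set"
  assumes "\<And>n. m n > 0"
    and "\<And>n. is_subspace (m n) (V n)"
    and "filterlim (\<lambda>n. card (weight_class 1 (V n))) at_top sequentially"
  shows "(\<lambda>n. alpha (m n) (V n)) \<longlonglongrightarrow> 0"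
proof (rule LIMSEQ_I)
  fix r :: real assume r: "r > 0"
  obtain j where j: "acb j < r" using acb_small[OF r] by blast
  have "eventually (\<lambda>n. 2*j \<le> card (weight_class 1 (V n))) sequentially"
    using assms(3) unfolding filterlim_at_top by blast
  then obtain N where N: "\<And>n. n \<ge> N \<Longrightarrow> 2*j \<le> card (weight_class 1 (V n))"
    unfolding eventually_sequentially by blast
  have "norm (alpha (m n) (V n) - 0) < r" if n: "n \<ge> N" for n
  proof -
    have sub: "is_subspace (m n) (V n)" by (rule assms(2))
    have "2*j \<le> card {l. ind {l} \<in> V n}" using N[OF n] card_wc1[of "V n"] by simp
    then obtain S where S: "S \<subseteq> {l. ind {l} \<in> V n}" "card S = 2*j" "finite S"
      using obtain_subset_with_card_n by blast
    have Vg: "V n \<subseteq> gf2_space (m n)" using sub unfolding is_subspace_def by auto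
    have finV: "finite (V n)" using finite_subset[OF Vg finite_gf2] .
    have "V n \<noteq> {}" using sub unfolding is_subspace_def by auto
    then have cV: "real (card (V n)) > 0" using finV by (simp add: card_gt_0_iff)
    have e1: "card S choose (card S div 2) = (2*j) choose j" using S(2) by simp
    have e2: "(2::nat) ^ card S = 4 ^ j" using S(2) by (simp add: power_mult)
    have "real (card (weight_class i (coset (V n) x))) / real (card (V n)) \<le> acb j"
      if x: "x \<in> gf2_space (m n)" for i x
    proof -
      have "card (weight_class i (coset (V n) x)) * 4 ^ j \<le> card (V n) * ((2*j) choose j)"
        using key[OF sub x S(1) S(3), of i] unfolding e1 e2 .
      then have "real (card (weight_class i (coset (V n) x)) * 4 ^ j) \<le> real (card (V n) * ((2*j) choose j))"
        by (subst of_nat_le_iff)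
      then have "real (card (weight_class i (coset (V n) x))) * 4 ^ j \<le> real (card (V n)) * real ((2*j) choose j)"
        by (simp only: of_nat_mult of_nat_power of_nat_numeral)
      then show ?thesis unfolding acb_def by (rule ratio[OF cV, rotated]) simp
    qed
    then have "0 \<le> alpha (m n) (V n) \<and> alpha (m n) (V n) \<le> acb j"
      using alpha_bound[OF sub] by blast
    then show ?thesis using j by simp
  qed
  then show "\<exists>no. \<forall>n\<ge>no. norm (alpha (m n) (V n) - 0) < r" by blast
qed

end
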